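(* Let $n\ge 2$ and let $q=(q_1,\dots,q_n)\in\mathbb{R}^n$ with $\sum_{i=1}^n q_i=1$ and $q_n\neq 0$. Let $Q_1$ be the $(n-1)\times(n-1)$ matrix with entries $(Q_1)_{ij}=q_i-\delta_{ij}$, and $Q_2$ the $(n-1)\times(n-1)$ matrix with entries $(Q_2)_{ij}=\frac{1}{q_n}(q_n\delta_{ij}+q_i)$. Let $A_0=(a_{ij})_{1\le i,j\le n-1}$ be any real $(n-1)\times(n-1)$ matrix and let $A$ be the $n\times n$ matrix whose entries are $a_{ij}$ for $i,j\le n-1$, $a_{in}=-\sum_{j=1}^{n-1}\frac{q_j}{q_n}a_{ij}$ for $i\le n-1$, and whose last row is zero. Let $\bar Q_1=(\bar q_{ij})$ be an $(n-1)\times(n-1)$ matrix such that $(\bar Q_1)^tQ_1$ is diagonal. If there exists $d=(d_1,\dots,d_{n-1})\in\mathbb{R}^{n-1}$ such that the matrix $\bar Q_1\,\mathrm{diag}(d_i)_i\,A_0\,Q_2$ is skew-symmetric, then the function $$H_D(u)=\sum_{i=1}^{n-1}d_i\Big(\sum_{k=1}^{n-1}\bar q_{ki}q_k\Big)u_i+\sum_{i=1}^{n-1}d_i\Big(\Big(\sum_{k=1}^{n-1}\bar q_{ki}q_k\Big)-\bar q_{ii}\Big)e^{u_i}$$ is a constant of motion of the vector field $\tilde X_B(u)=B\eta_q(u)$ on $\mathbb{R}^{n-1}$, where $B=-EAE^t$, and consequently $$H_D\circ\phi^{-1}(x)=\sum_{i=1}^{n-1}d_i\Big(\sum_{k=1}^{n-1}\bar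 q_{ki}q_k\Big)\log\Big(\frac{x_i}{x_n}\Big)+\sum_{i=1}^{n-1}d_i\Big(\Big(\sum_{k=1}^{n-1}\bar q_{ki}q_k\Big)-\bar q_{ii}\Big)\frac{x_i}{x_n}$$ is a constant of motion of the replicator vector field $X_A$ on the interior of $\Delta^{n-1}$.
   Context: $\Delta^{n-1}=\{x\in\mathbb{R}^n: x_i\ge 0,\ \sum_i x_i=1\}$. The replicator vector field with payoff matrix $A$ is $X_A(x)_i=x_i\big((Ax)_i-x^tAx\big)$ on $\Delta^{n-1}$. $E=[-I_{n-1}\mid\mathbb{1}]$ is the $(n-1)\times n$ matrix whose row $i$ has $-1$ in column $i$, $1$ in column $n$ and zeros elsewhere. $\eta_q(u)_i=q_i-\frac{e^{u_i}}{1+\sum_{j=1}^{n-1}e^{u_j}}$ for $u\in\mathbb{R}^{n-1}$, $1\le i\le n-1$. $\phi:\mathbb{R}^{n-1}\to(\Delta^{n-1})^\circ$ is the diffeomorphism $\phi(u)=\big(\frac{e^{u_1}}{1+\sum_j e^{u_j}},\dots,\frac{e^{u_{n-1}}}{1+\sum_j e^{u_j}},\frac{1}{1+\sum_j e^{u_j}}\big)$, so $\phi^{-1}(x)=(\log(x_i/x_n))_{i\le n-1}$; $\tilde X_B$ is the pullback of $X_A$ by $\phi$. A constant of motion is a function constant along integral curves. *)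

theory Defs
  imports "HOL-Analysis.Analysis"
begin

(* Conventions: vectors in R^m are functions nat => real, with coordinates 1..m used;
   matrices are functions nat => nat => real with indices 1-based. *)

definition kdelta :: "nat \<Rightarrow> nat \<Rightarrow> real" where
  "kdelta i j = (if i = j then 1 else 0)"

definition matQ1 :: "(nat \<Rightarrow> real) \<Rightarrow> nat \<Rightarrow> nat \<Rightarrow> real" where
  "matQ1 q i j = q i - kdelta i j"

definition matQ2 :: "nat \<Rightarrow> (nat \<Rightarrow> real) \<Rightarrow> nat \<Rightarrow> nat \<Rightarrow> real" where
  "matQ2 n q i j = (1 / q n) * (q n * kdelta i j + q i)"

definition matA :: "nat \<Rightarrow> (nat \<Rightarrow> real) \<Rightarrow> (nat \<Rightarrow> nat \<Rightarrow> real) \<Rightarrow> nat \<Rightarrow> nat \<Rightarrow> real" where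
  "matA n q A0 i j =
     (if i = n then 0
      else if j = n then - (\<Sum>k=1..n-1. (q k / q n) * A0 i k)
      else A0 i j)"

definition matE :: "nat \<Rightarrow> nat \<Rightarrow> nat \<Rightarrow> real" where
  "matE n i j = (if j = i then -1 else 0) + (if j = n then 1 else 0)"

definition matB :: "nat \<Rightarrow> (nat \<Rightarrow> nat \<Rightarrow> real) \<Rightarrow> nat \<Rightarrow> nat \<Rightarrow> real" where
  "matB n A i j = - (\<Sum>k=1..n. \<Sum>l=1..n. matE n i k * A k l * matE n j l)"

definition eta :: "nat \<Rightarrow> (nat \<Rightarrow> real) \<Rightarrow> (nat \<Rightarrow> real) \<Rightarrow> nat \<Rightarrow> real" where
  "eta n q u i = q i - exp (u i) / (1 + (\<Sum>j=1..n-1. exp (u j)))"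

definition XBtilde :: "nat \<Rightarrow> (nat \<Rightarrow> nat \<Rightarrow> real) \<Rightarrow> (nat \<Rightarrow> real) \<Rightarrow> (nat \<Rightarrow> real) \<Rightarrow> nat \<Rightarrow> real" where
  "XBtilde n B q u i = (\<Sum>j=1..n-1. B i j * eta n q u j)"

definition replicator :: "nat \<Rightarrow> (nat \<Rightarrow> nat \<Rightarrow> real) \<Rightarrow> (nat \<Rightarrow> real) \<Rightarrow> nat \<Rightarrow> real" where
  "replicator n A x i =
     x i * ((\<Sum>j=1..n. A i j * x j) - (\<Sum>k=1..n. \<Sum>j=1..n. x k * A k j * x j))"

definition simplex_interior :: "nat \<Rightarrow> (nat \<Rightarrow> real) set" where
  "simplex_interior n = {x. (\<forall>i\<in>{1..n}. 0 < x i) \<and> (\<Sum>i=1..n. x i) = 1}"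

definition integral_curve ::
  "nat \<Rightarrow> ((nat \<Rightarrow> real) \<Rightarrow> nat \<Rightarrow> real) \<Rightarrow> (nat \<Rightarrow> real) set \<Rightarrow> real set \<Rightarrow> (real \<Rightarrow> nat \<Rightarrow> real) \<Rightarrow> bool" where
  "integral_curve m X S T \<gamma> \<longleftrightarrow>
     is_interval T \<and>
     (\<forall>t\<in>T. \<gamma> t \<in> S \<and>
        (\<forall>i\<in>{1..m}. ((\<lambda>s. \<gamma> s i) has_real_derivative X (\<gamma> t) i) (at t within T)))"

definition constant_of_motion ::
  "nat \<Rightarrow> ((nat \<Rightarrow> real) \<Rightarrow> nat \<Rightarrow> real) \<Rightarrow> (nat \<Rightarrow> real) set \<Rightarrow> ((nat \<Rightarrow> real) \<Rightarrow> real) \<Rightarrow> bool" where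
  "constant_of_motion m X S H \<longleftrightarrow>
     (\<forall>T \<gamma>. integral_curve m X S T \<gamma> \<longrightarrow> (\<forall>s\<in>T. \<forall>t\<in>T. H (\<gamma> s) = H (\<gamma> t)))"

end

theory Submission
  imports Defs
begin


lemma sum_last: "1 \<le> (n::nat) \<Longrightarrow> (\<Sum>i=1..n. f i) = (\<Sum>i=1..n-1. f i) + (f n :: real)"
  by (cases n) (auto simp: sum.cl_ivl_Suc)

lemma sumE_left:
  assumes "i \<in> {1..n-1}"
  shows "(\<Sum>k=1..n. matE n i k * f k) = f n - f i"
proof -
  have "(\<Sum>k=1..n. matE n i k * f k) = (\<Sum>k=1..n. (if k = i then - f k else 0) + (if k = n then f k else 0))"
    using assms by (intro sum.cong) (auto simp: matE_def)
  also have "\<dots> = f n - f i" using assms by (auto simp: sum.distrib)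
  finally show ?thesis .
qed

lemma matB_eq:
  assumes "i \<in> {1..n-1}" "j \<in> {1..n-1}"
  shows "matB n (matA n q A0) i j = - A0 i j - (\<Sum>k=1..n-1. (q k / q n) * A0 i k)"
proof -
  let ?A = "matA n q A0"
  have 1: "(\<Sum>l=1..n. matE n i k * ?A k l * matE n j l) = matE n i k * (?A k n - ?A k j)" for k
  proof -
    have "(\<Sum>l=1..n. matE n i k * ?A k l * matE n j l) = matE n i k * (\<Sum>l=1..n. matE n j l * ?A k l)"
      by (simp add: sum_distrib_left mult_ac)
    then show ?thesis using sumE_left[OF assms(2), of "?A k"] by simp
  qed
  have "matB n ?A i j = - (\<Sum>k=1..n. matE n i k * (?A k n - ?A k j))"
    unfolding matB_def using 1 by simp
  also have "\<dots> = - ((?A n n - ?A n j) - (?A i n - ?A i j))"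
    using sumE_left[OF assms(1), of "\<lambda>k. ?A k n - ?A k j"] by simp
  also have "\<dots> = - A0 i j - (\<Sum>k=1..n-1. (q k / q n) * A0 i k)"
    using assms by (auto simp: matA_def)
  finally show ?thesis .
qed

lemma skew0:
  assumes "\<forall>i\<in>I. \<forall>j\<in>I. M i j = - M j i"
  shows "(\<Sum>k\<in>I. \<Sum>j\<in>I. e k * M k j * e j) = (0::real)"
proof -
  let ?X = "(\<Sum>k\<in>I. \<Sum>j\<in>I. e k * M k j * e j)"
  have "?X = (\<Sum>k\<in>I. \<Sum>j\<in>I. - (e j * M j k * e k))"
  proof (intro sum.cong refl)
    fix k j assume "k \<in> I" "j \<in> I"
    then have "M k j = - M j k" using assms by blast
    then show "e k * M k j * e j = - (e j * M j k * e k)" by simp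
  qed
  also have "\<dots> = - (\<Sum>j\<in>I. \<Sum>k\<in>I. e j * M j k * e k)"
    by (subst sum.swap) (simp add: sum_negf)
  finally show ?thesis by simp
qed

lemma rearr:
  "(\<Sum>i\<in>I. d i * (\<Sum>k\<in>I. Qb k i * e k) * (\<Sum>l\<in>I. a i l * (\<Sum>j\<in>I. Q l j * e j)))
   = (\<Sum>k\<in>I. \<Sum>j\<in>I. e k * (\<Sum>i\<in>I. \<Sum>l\<in>I. Qb k i * d i * a i l * Q l j) * (e j::real))"
proof -
  let ?F = "\<lambda>i k l j. e k * (Qb k i * d i * a i l * Q l j) * e j"
  have "(\<Sum>i\<in>I. d i * (\<Sum>k\<in>I. Qb k i * e k) * (\<Sum>l\<in>I. a i l * (\<Sum>j\<in>I. Q l j * e j)))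
     = (\<Sum>i\<in>I. \<Sum>l\<in>I. \<Sum>j\<in>I. \<Sum>k\<in>I. ?F i k l j)"
    unfolding sum_distrib_left sum_distrib_right by (simp add: mult_ac)
  also have "\<dots> = (\<Sum>i\<in>I. \<Sum>l\<in>I. \<Sum>k\<in>I. \<Sum>j\<in>I. ?F i k l j)"
    by (rule sum.cong[OF refl], rule sum.cong[OF refl], rule sum.swap)
  also have "\<dots> = (\<Sum>i\<in>I. \<Sum>k\<in>I. \<Sum>l\<in>I. \<Sum>j\<in>I. ?F i k l j)"
    by (rule sum.cong[OF refl], rule sum.swap)
  also have "\<dots> = (\<Sum>k\<in>I. \<Sum>i\<in>I. \<Sum>l\<in>I. \<Sum>j\<in>I. ?F i k l j)"
    by (rule sum.swap)
  also have "\<dots> = (\<Sum>k\<in>I. \<Sum>i\<in>I. \<Sum>j\<in>I. \<Sum>l\<in>I. ?F i k l j)"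
    by (rule sum.cong[OF refl], rule sum.cong[OF refl], rule sum.swap)
  also have "\<dots> = (\<Sum>k\<in>I. \<Sum>j\<in>I. \<Sum>i\<in>I. \<Sum>l\<in>I. ?F i k l j)"
    by (rule sum.cong[OF refl], rule sum.swap)
  also have "\<dots> = (\<Sum>k\<in>I. \<Sum>j\<in>I. e k * (\<Sum>i\<in>I. \<Sum>l\<in>I. Qb k i * d i * a i l * Q l j) * (e j::real))"
    by (simp add: sum_distrib_left sum_distrib_right)
  finally show ?thesis .
qed


lemma key1:
  fixes n :: nat and q :: "nat \<Rightarrow> real" and A0 Qbar :: "nat \<Rightarrow> nat \<Rightarrow> real"
    and d :: "nat \<Rightarrow> real" and u :: "nat \<Rightarrow> real"
  assumes qn: "q n \<noteq> 0"
    and h4: "\<forall>i\<in>{1..n-1}. \<forall>j\<in>{1..n-1}. i \<noteq> j \<longrightarrow>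
           (\<Sum>k=1..n-1. Qbar k i * matQ1 q k j) = 0"
    and h5: "\<forall>i\<in>{1..n-1}. \<forall>j\<in>{1..n-1}.
           (\<Sum>k=1..n-1. \<Sum>l=1..n-1. Qbar i k * d k * A0 k l * matQ2 n q l j)
         = - (\<Sum>k=1..n-1. \<Sum>l=1..n-1. Qbar j k * d k * A0 k l * matQ2 n q l i)"
  shows "(\<Sum>i=1..n-1. (d i * (\<Sum>k=1..n-1. Qbar k i * q k)
            + d i * ((\<Sum>k=1..n-1. Qbar k i * q k) - Qbar i i) * exp (u i))
          * XBtilde n (matB n (matA n q A0)) q u i) = 0"
proof -
  define I where "I = {1..n-1}"
  define c where "c i = (\<Sum>k\<in>I. Qbar k i * q k)" for i
  define S where "S = 1 + (\<Sum>j\<in>I. exp (u j))"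
  define e where "e j = eta n q u j" for j
  define XB where "XB = XBtilde n (matB n (matA n q A0)) q u"
  have fI: "finite I" by (simp add: I_def)
  have Spos: "S > 0" unfolding S_def by (smt (verit) exp_gt_zero sum_nonneg)
  have e_eq: "e j = q j - exp (u j) / S" for j by (simp add: e_def eta_def S_def I_def)
  have offd: "Qbar k i = c i" if "i \<in> I" "k \<in> I" "k \<noteq> i" for i k
  proof -
    have "(\<Sum>l\<in>I. Qbar l i * matQ1 q l k) = 0" using h4 that by (auto simp: I_def)
    moreover have "(\<Sum>l\<in>I. Qbar l i * matQ1 q l k) = c i - Qbar k i"
    proof -
      have "(\<Sum>l\<in>I. Qbar l i * matQ1 q l k) = (\<Sum>l\<in>I. Qbar l i * q l - (if l = k then Qbar l i else 0))"
        by (intro sum.cong refl) (auto simp: matQ1_def kdelta_def algebra_simps)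
      also have "\<dots> = c i - Qbar k i" using that fI by (simp add: sum_subtractf c_def)
      finally show ?thesis .
    qed
    ultimately show ?thesis by simp
  qed
  have G: "d i * c i + d i * (c i - Qbar i i) * exp (u i) = S * d i * (\<Sum>k\<in>I. Qbar k i * e k)"
    if "i \<in> I" for i
  proof -
    have "(\<Sum>k\<in>I. Qbar k i * exp (u k)) = (\<Sum>k\<in>I. c i * exp (u k) + (if k = i then (Qbar i i - c i) * exp (u i) else 0))"
      using offd that by (intro sum.cong refl) (auto simp: algebra_simps)
    also have "\<dots> = c i * (S - 1) + (Qbar i i - c i) * exp (u i)"
      using that fI by (simp add: sum.distrib sum_distrib_left S_def)
    finally have A: "(\<Sum>k\<in>I. Qbar k i * exp (u k)) = c i * (S - 1) + (Qbar i i - c i) * exp (u i)" .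
    have "(\<Sum>k\<in>I. Qbar k i * e k) = c i - (\<Sum>k\<in>I. Qbar k i * exp (u k)) / S"
      by (simp add: e_eq right_diff_distrib sum_subtractf c_def sum_divide_distrib)
    then have B: "S * (\<Sum>k\<in>I. Qbar k i * e k) = S * c i - (\<Sum>k\<in>I. Qbar k i * exp (u k))"
      using Spos by (simp add: right_diff_distrib)
    have "S * d i * (\<Sum>k\<in>I. Qbar k i * e k) = d i * (S * (\<Sum>k\<in>I. Qbar k i * e k))" by simp
    also have "\<dots> = d i * (S * c i - (c i * (S - 1) + (Qbar i i - c i) * exp (u i)))"
      unfolding B A ..
    finally show ?thesis by (simp add: algebra_simps)
  qed
  define r where "r i = (\<Sum>k\<in>I. (q k / q n) * A0 i k)" for i
  have Bq: "XB i = - (\<Sum>l\<in>I. A0 i l * (\<Sum>j\<in>I. matQ2 n q l j * e j))" if "i \<in> I" for i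
  proof -
    have "XB i = (\<Sum>j\<in>I. (- A0 i j - r i) * e j)"
      unfolding XB_def XBtilde_def using that matB_eq[of i n j q A0 for j]
      by (intro sum.cong) (auto simp: I_def r_def e_def)
    also have "\<dots> = - (\<Sum>j\<in>I. A0 i j * e j) - r i * (\<Sum>j\<in>I. e j)"
      by (simp add: algebra_simps sum.distrib sum_distrib_left sum_negf sum_subtractf)
    also have "\<dots> = - (\<Sum>l\<in>I. A0 i l * (e l + q l / q n * (\<Sum>j\<in>I. e j)))"
      by (simp add: algebra_simps sum.distrib sum_distrib_left sum_distrib_right r_def)
    also have "\<dots> = - (\<Sum>l\<in>I. A0 i l * (\<Sum>j\<in>I. matQ2 n q l j * e j))"
    proof -
      have "(\<Sum>j\<in>I. matQ2 n q l j * e j) = e l + q l / q n * (\<Sum>j\<in>I. e j)" if "l \<in> I" for l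
      proof -
        have "(\<Sum>j\<in>I. matQ2 n q l j * e j) = (\<Sum>j\<in>I. (if l = j then e j else 0) + q l / q n * e j)"
          using qn by (intro sum.cong refl) (auto simp: matQ2_def kdelta_def field_simps)
        then show ?thesis using that fI by (simp add: sum.distrib sum_distrib_left)
      qed
      then show ?thesis by simp
    qed
    finally show ?thesis .
  qed
  define M where "M k j = (\<Sum>i\<in>I. \<Sum>l\<in>I. Qbar k i * d i * A0 i l * matQ2 n q l j)" for k j
  have skew: "\<forall>k\<in>I. \<forall>j\<in>I. M k j = - M j k" unfolding M_def I_def using h5 by blast
  have "(\<Sum>i\<in>I. (d i * c i + d i * (c i - Qbar i i) * exp (u i)) * XB i)
      = (\<Sum>i\<in>I. - S * (d i * (\<Sum>k\<in>I. Qbar k i * e k) * (\<Sum>l\<in>I. A0 i l * (\<Sum>j\<in>I. matQ2 n q l j * e j))))"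
    using G Bq by (intro sum.cong refl) simp
  also have "\<dots> = - S * (\<Sum>i\<in>I. d i * (\<Sum>k\<in>I. Qbar k i * e k) * (\<Sum>l\<in>I. A0 i l * (\<Sum>j\<in>I. matQ2 n q l j * e j)))"
    by (rule sum_distrib_left[symmetric])
  also have "\<dots> = - S * (\<Sum>k\<in>I. \<Sum>j\<in>I. e k * M k j * e j)"
    unfolding M_def by (rule arg_cong[where f="\<lambda>z. - S * z"], rule rearr)
  also have "\<dots> = 0" using skew0[OF skew] by simp
  finally show ?thesis unfolding I_def c_def XB_def by simp
qed


lemma const_on_interval:
  assumes "is_interval T" "\<And>x. x \<in> T \<Longrightarrow> (f has_real_derivative 0) (at x within T)"
    "s \<in> T" "t \<in> T"
  shows "f s = (f t :: real)"
proof -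
  obtain c where "\<forall>x\<in>T. f x = c"
    using has_field_derivative_zero_constant[of T f] assms(1,2) is_interval_convex by blast
  then show ?thesis using assms(3,4) by simp
qed

lemma part1:
  fixes n :: nat and q :: "nat \<Rightarrow> real" and A0 Qbar :: "nat \<Rightarrow> nat \<Rightarrow> real"
    and d :: "nat \<Rightarrow> real"
  assumes qn: "q n \<noteq> 0"
    and h4: "\<forall>i\<in>{1..n-1}. \<forall>j\<in>{1..n-1}. i \<noteq> j \<longrightarrow>
           (\<Sum>k=1..n-1. Qbar k i * matQ1 q k j) = 0"
    and h5: "\<forall>i\<in>{1..n-1}. \<forall>j\<in>{1..n-1}.
           (\<Sum>k=1..n-1. \<Sum>l=1..n-1. Qbar i k * d k * A0 k l * matQ2 n q l j)
         = - (\<Sum>k=1..n-1. \<Sum>l=1..n-1. Qbar j k * d k * A0 k l * matQ2 n q l i)"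
  shows "constant_of_motion (n-1) (XBtilde n (matB n (matA n q A0)) q) UNIV
           (\<lambda>u. (\<Sum>i=1..n-1. d i * (\<Sum>k=1..n-1. Qbar k i * q k) * u i)
              + (\<Sum>i=1..n-1. d i * ((\<Sum>k=1..n-1. Qbar k i * q k) - Qbar i i) * exp (u i)))"
  unfolding constant_of_motion_def
proof (intro allI impI ballI)
  fix T \<gamma> s t
  assume ic: "integral_curve (n - 1) (XBtilde n (matB n (matA n q A0)) q) UNIV T \<gamma>"
    and st: "s \<in> T" "t \<in> T"
  define I where "I = {1..n-1}"
  define c where "c i = (\<Sum>k=1..n-1. Qbar k i * q k)" for i
  define XB where "XB = XBtilde n (matB n (matA n q A0)) q"
  have iv: "is_interval T" using ic by (simp add: integral_curve_def)
  have dg: "((\<lambda>s. \<gamma> s i) has_real_derivative XB (\<gamma> x) i) (at x within T)" if "x \<in> T" "i \<in> I" for x i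
    using ic that by (simp add: integral_curve_def XB_def I_def)
  define F where "F s = (\<Sum>i\<in>I. d i * c i * \<gamma> s i) + (\<Sum>i\<in>I. d i * (c i - Qbar i i) * exp (\<gamma> s i))" for s
  have "F s = F t"
  proof (rule const_on_interval[OF iv _ st])
    fix x assume x: "x \<in> T"
    have D: "((\<lambda>s. (\<Sum>i\<in>I. d i * c i * \<gamma> s i) + (\<Sum>i\<in>I. d i * (c i - Qbar i i) * exp (\<gamma> s i)))
       has_real_derivative (\<Sum>i\<in>I. d i * c i * XB (\<gamma> x) i) + (\<Sum>i\<in>I. d i * (c i - Qbar i i) * (exp (\<gamma> x i) * XB (\<gamma> x) i)))
       (at x within T)"
      by (intro DERIV_add DERIV_sum DERIV_cmult DERIV_chain2[OF DERIV_exp] dg x)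
    have "(\<Sum>i\<in>I. d i * c i * XB (\<gamma> x) i) + (\<Sum>i\<in>I. d i * (c i - Qbar i i) * (exp (\<gamma> x i) * XB (\<gamma> x) i))
        = (\<Sum>i\<in>I. (d i * c i + d i * (c i - Qbar i i) * exp (\<gamma> x i)) * XB (\<gamma> x) i)"
      by (simp add: sum.distrib[symmetric] algebra_simps)
    also have "\<dots> = 0" using key1[OF qn h4 h5, of "\<gamma> x"] by (simp add: I_def c_def XB_def)
    finally show "(F has_real_derivative 0) (at x within T)" using D unfolding F_def by simp
  qed
  then show "(\<Sum>i=1..n-1. d i * (\<Sum>k=1..n-1. Qbar k i * q k) * \<gamma> s i)
              + (\<Sum>i=1..n-1. d i * ((\<Sum>k=1..n-1. Qbar k i * q k) - Qbar i i) * exp (\<gamma> s i))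
      = (\<Sum>i=1..n-1. d i * (\<Sum>k=1..n-1. Qbar k i * q k) * \<gamma> t i)
              + (\<Sum>i=1..n-1. d i * ((\<Sum>k=1..n-1. Qbar k i * q k) - Qbar i i) * exp (\<gamma> t i))"
    by (simp add: F_def I_def c_def)
qed



lemma part2:
  fixes n :: nat and q :: "nat \<Rightarrow> real" and A0 Qbar :: "nat \<Rightarrow> nat \<Rightarrow> real"
    and d :: "nat \<Rightarrow> real"
  assumes n2: "n \<ge> 2" and sq: "(\<Sum>i=1..n. q i) = 1" and qn: "q n \<noteq> 0"
    and P1: "constant_of_motion (n-1) (XBtilde n (matB n (matA n q A0)) q) UNIV
           (\<lambda>u. (\<Sum>i=1..n-1. d i * (\<Sum>k=1..n-1. Qbar k i * q k) * u i)
              + (\<Sum>i=1..n-1. d i * ((\<Sum>k=1..n-1. Qbar k i * q k) - Qbar i i) * exp (u i)))"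
  shows "constant_of_motion n (replicator n (matA n q A0)) (simplex_interior n)
           (\<lambda>x. (\<Sum>i=1..n-1. d i * (\<Sum>k=1..n-1. Qbar k i * q k) * ln (x i / x n))
              + (\<Sum>i=1..n-1. d i * ((\<Sum>k=1..n-1. Qbar k i * q k) - Qbar i i) * (x i / x n)))"
  unfolding constant_of_motion_def
proof (intro allI impI ballI)
  fix T x s t
  assume ic: "integral_curve n (replicator n (matA n q A0)) (simplex_interior n) T x"
    and st: "s \<in> T" "t \<in> T"
  define A where "A = matA n q A0"
  define I where "I = {1..n-1}"
  define g where "g s = (\<lambda>i. ln (x s i / x s n))" for s
  have fI: "finite I" by (simp add: I_def)
  have nI: "n \<notin> I" using n2 by (simp add: I_def)
  have iv: "is_interval T" using ic by (simp add: integral_curve_def)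
  have pos: "x t i > 0" if "t \<in> T" "i \<in> {1..n}" for t i
    using ic that by (auto simp: integral_curve_def simplex_interior_def)
  have sum1: "(\<Sum>i=1..n. x t i) = 1" if "t \<in> T" for t
    using ic that by (auto simp: integral_curve_def simplex_interior_def)
  have dx: "((\<lambda>s. x s i) has_real_derivative replicator n A (x t) i) (at t within T)"
    if "t \<in> T" "i \<in> {1..n}" for t i
    using ic that by (auto simp: integral_curve_def A_def)
  have Anj: "A n j = 0" for j by (simp add: A_def matA_def)
  have nn: "n \<in> {1..n}" using n2 by simp
  have split: "(\<Sum>j=1..n. f j) = (\<Sum>j\<in>I. f j) + (f n :: real)" for f
    using sum_last[of n f] n2 by (simp add: I_def)
  have gic: "integral_curve (n-1) (XBtilde n (matB n A) q) UNIV T g"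
    unfolding integral_curve_def
  proof (intro conjI ballI)
    show "is_interval T" by (rule iv)
    fix t assume t: "t \<in> T"
    show "g t \<in> UNIV" by simp
    fix i assume i: "i \<in> {1..n-1}"
    have iI: "i \<in> I" using i by (simp add: I_def)
    have i1: "i \<in> {1..n}" using i by auto
    define R where "R k = (\<Sum>j=1..n. A k j * x t j) - (\<Sum>k=1..n. \<Sum>j=1..n. x t k * A k j * x t j)" for k
    have dxi: "((\<lambda>s. x s i) has_real_derivative x t i * R i) (at t within T)"
      using dx[OF t i1] by (simp add: replicator_def R_def)
    have dxn: "((\<lambda>s. x s n) has_real_derivative x t n * R n) (at t within T)"
      using dx[OF t nn] by (simp add: replicator_def R_def)
    have pi: "x t i > 0" and pn: "x t n > 0" using pos[OF t i1] pos[OF t nn] by auto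
    have D1: "((\<lambda>s. x s i / x s n) has_real_derivative
        ((x t i * R i) * x t n - x t i * (x t n * R n)) / (x t n * x t n)) (at t within T)"
      by (rule DERIV_divide[OF dxi dxn]) (use pn in simp)
    have D2: "((\<lambda>s. ln (x s i / x s n)) has_real_derivative
        inverse (x t i / x t n) * (((x t i * R i) * x t n - x t i * (x t n * R n)) / (x t n * x t n)))
        (at t within T)"
      by (rule DERIV_chain2[OF DERIV_ln D1]) (use pi pn in simp)
    have val: "inverse (x t i / x t n) * (((x t i * R i) * x t n - x t i * (x t n * R n)) / (x t n * x t n))
        = R i - R n" using pi pn by (simp add: field_simps)
    have Rn: "R i - R n = (\<Sum>j=1..n. A i j * x t j)" by (simp add: R_def Anj)
    define r where "r = (\<Sum>k\<in>I. (q k / q n) * A0 i k)"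
    have eta_eq: "eta n q (g t) j = q j - x t j" if "j \<in> I" for j
    proof -
      have "(\<Sum>j\<in>I. exp (g t j)) = (\<Sum>j\<in>I. x t j / x t n)"
        using pos[OF t] by (intro sum.cong refl) (auto simp: g_def I_def)
      also have "\<dots> = (1 - x t n) / x t n"
        using sum1[OF t] split[of "x t"] by (simp add: sum_divide_distrib[symmetric])
      finally have s: "1 + (\<Sum>j\<in>I. exp (g t j)) = 1 / x t n" using pn by (simp add: field_simps)
      have "exp (g t j) = x t j / x t n" using pos[OF t, of j] that pn by (auto simp: g_def I_def)
      then show ?thesis using s pn unfolding eta_def I_def[symmetric] by simp
    qed
    have "XBtilde n (matB n A) q (g t) i = (\<Sum>j\<in>I. (- A0 i j - r) * (q j - x t j))"
      unfolding XBtilde_def I_def[symmetric] using eta_eq matB_eq[of i n j q A0 for j] iI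
      by (intro sum.cong refl) (auto simp: A_def r_def I_def)
    also have "\<dots> = - (\<Sum>j\<in>I. A0 i j * q j) + (\<Sum>j\<in>I. A0 i j * x t j) - r * (\<Sum>j\<in>I. q j) + r * (\<Sum>j\<in>I. x t j)"
      by (simp add: algebra_simps sum.distrib sum_subtractf sum_distrib_left)
    also have "(\<Sum>j\<in>I. A0 i j * q j) = q n * r"
      using qn by (simp add: r_def sum_distrib_left field_simps)
    also have "(\<Sum>j\<in>I. q j) = 1 - q n" using sq split[of q] by simp
    also have "(\<Sum>j\<in>I. x t j) = 1 - x t n" using sum1[OF t] split[of "x t"] by simp
    also have "- (q n * r) + (\<Sum>j\<in>I. A0 i j * x t j) - r * (1 - q n) + r * (1 - x t n)
       = (\<Sum>j=1..n. A i j * x t j)"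
    proof -
      have "(\<Sum>j\<in>I. A i j * x t j) = (\<Sum>j\<in>I. A0 i j * x t j)"
        using iI nI by (intro sum.cong refl) (auto simp: A_def matA_def I_def)
      then have "(\<Sum>j=1..n. A i j * x t j) = (\<Sum>j\<in>I. A0 i j * x t j) + A i n * x t n"
        using split[of "\<lambda>j. A i j * x t j"] by simp
      moreover have "A i n = - r" using iI nI by (auto simp: A_def matA_def r_def I_def)
      ultimately show ?thesis by (simp add: algebra_simps)
    qed
    finally have xb: "XBtilde n (matB n A) q (g t) i = (\<Sum>j=1..n. A i j * x t j)" .
    show "((\<lambda>s. g s i) has_real_derivative XBtilde n (matB n A) q (g t) i) (at t within T)"
      using D2 unfolding val Rn xb[symmetric] g_def by simp
  qed
  have E: "(\<lambda>u. (\<Sum>i=1..n-1. d i * (\<Sum>k=1..n-1. Qbar k i * q k) * u i)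
              + (\<Sum>i=1..n-1. d i * ((\<Sum>k=1..n-1. Qbar k i * q k) - Qbar i i) * exp (u i))) (g s)
      = (\<lambda>u. (\<Sum>i=1..n-1. d i * (\<Sum>k=1..n-1. Qbar k i * q k) * u i)
              + (\<Sum>i=1..n-1. d i * ((\<Sum>k=1..n-1. Qbar k i * q k) - Qbar i i) * exp (u i))) (g t)"
    using P1 gic st unfolding constant_of_motion_def A_def by blast
  have ex: "exp (g r i) = x r i / x r n" if "r \<in> T" "i \<in> {1..n-1}" for r i
  proof -
    have "x r i > 0" "x r n > 0" using pos[OF that(1), of i] pos[OF that(1) nn] that(2) by auto
    then show ?thesis by (simp add: g_def)
  qed
  have H: "(\<Sum>i=1..n-1. d i * (\<Sum>k=1..n-1. Qbar k i * q k) * ln (x r i / x r n))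
              + (\<Sum>i=1..n-1. d i * ((\<Sum>k=1..n-1. Qbar k i * q k) - Qbar i i) * (x r i / x r n))
     = (\<Sum>i=1..n-1. d i * (\<Sum>k=1..n-1. Qbar k i * q k) * g r i)
              + (\<Sum>i=1..n-1. d i * ((\<Sum>k=1..n-1. Qbar k i * q k) - Qbar i i) * exp (g r i))"
    if "r \<in> T" for r
    using ex[OF that] by (simp add: g_def)
  show "(\<Sum>i=1..n-1. d i * (\<Sum>k=1..n-1. Qbar k i * q k) * ln (x s i / x s n))
              + (\<Sum>i=1..n-1. d i * ((\<Sum>k=1..n-1. Qbar k i * q k) - Qbar i i) * (x s i / x s n))
      = (\<Sum>i=1..n-1. d i * (\<Sum>k=1..n-1. Qbar k i * q k) * ln (x t i / x t n))
              + (\<Sum>i=1..n-1. d i * ((\<Sum>k=1..n-1. Qbar k i * q k) - Qbar i i) * (x t i / x t n))"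
    using E H[OF st(1)] H[OF st(2)] by simp
qed


theorem corollary3p2:
  fixes n :: nat and q :: "nat \<Rightarrow> real" and A0 Qbar :: "nat \<Rightarrow> nat \<Rightarrow> real"
    and d :: "nat \<Rightarrow> real"
  assumes "n \<ge> 2"
    and "(\<Sum>i=1..n. q i) = 1"
    and "q n \<noteq> 0"
    and "\<forall>i\<in>{1..n-1}. \<forall>j\<in>{1..n-1}. i \<noteq> j \<longrightarrow>
           (\<Sum>k=1..n-1. Qbar k i * matQ1 q k j) = 0"
    and "\<forall>i\<in>{1..n-1}. \<forall>j\<in>{1..n-1}.
           (\<Sum>k=1..n-1. \<Sum>l=1..n-1. Qbar i k * d k * A0 k l * matQ2 n q l j)
         = - (\<Sum>k=1..n-1. \<Sum>l=1..n-1. Qbar j k * d k * A0 k l * matQ2 n q l i)"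
  shows "constant_of_motion (n-1) (XBtilde n (matB n (matA n q A0)) q) UNIV
           (\<lambda>u. (\<Sum>i=1..n-1. d i * (\<Sum>k=1..n-1. Qbar k i * q k) * u i)
              + (\<Sum>i=1..n-1. d i * ((\<Sum>k=1..n-1. Qbar k i * q k) - Qbar i i) * exp (u i)))
       \<and> constant_of_motion n (replicator n (matA n q A0)) (simplex_interior n)
           (\<lambda>x. (\<Sum>i=1..n-1. d i * (\<Sum>k=1..n-1. Qbar k i * q k) * ln (x i / x n))
              + (\<Sum>i=1..n-1. d i * ((\<Sum>k=1..n-1. Qbar k i * q k) - Qbar i i) * (x i / x n)))"
  using part1[OF assms(3,4,5)] part2[OF assms(1,2,3) part1[OF assms(3,4,5)]] by blast

end
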